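(* Let $1\le p\le q$, $n=p+q$, and let $\mu=(a_1,\dots,a_p\mid b_1,\dots,b_q)$ be a $\Delta^+(\mathfrak{k},\mathfrak{t})$-dominant weight with non-negative integer entries. Then the following are equivalent: (i) there exist $w\in W(\mathfrak{g},\mathfrak{t})^1$ and $1\le i\le n$ with $\langle\mu+2\rho_c,w\xi_i\rangle>2\langle\rho,\xi_i\rangle$ (i.e. $\mu$ is u-large); (ii) there exist $0\le f\le p$ and $0\le g\le q$ such that $$\sum_{i=1}^f a_i+\sum_{j=1}^g b_j>2pq-2(p-f)(q-g).$$
   Context: Weights are vectors in $\mathbb{R}^n$ written $(x_1,\dots,x_p\mid y_1,\dots,y_q)$ with the standard inner product. $\rho_c=(p,p-1,\dots,1\mid q,q-1,\dots,1)$, $\rho=(n,n-1,\dots,1)$, $\xi_i=e_1+\cdots+e_i$. A weight is $\Delta^+(\mathfrak{k},\mathfrak{t})$-dominant if $x_1\ge\cdots\ge x_p\ge0$ and $y_1\ge\cdots\ge y_q\ge0$. $W(\mathfrak{g},\mathfrak{t})$ is the group of signed permutations of the $n$ coordinates; $C_{\mathfrak{g}}=\{z\in\mathbb{R}^n: z_1\ge\cdots\ge z_n\ge0\}$, $C$ is the closed cone of $\Delta^+(\mathfrak{k},\mathfrak{t})$-dominant weights, and $W(\mathfrak{g},\mathfrak{t})^1=\{w\in W(\mathfrak{g},\mathfrak{t})\mid w(C_{\mathfrak{g}})\subset C\}$. A weight $\nu$ is u-small (lies in the unitarily small convex hull) iff $\langle\nu+2\rho_c,w\xi_i\rangle\le2\langle\rho,\xi_i\rangle$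 for all $1\le i\le n$ and all $w\in W(\mathfrak{g},\mathfrak{t})^1$; u-large means not u-small. *)

theory Defs
  imports Complex_Main "HOL-Combinatorics.Permutations"
begin

text \<open>Weights in R^n are modelled as functions nat => real; only the coordinates
  with index < n matter (index j corresponds to coordinate j+1 of the paper).
  Coordinates 0..p-1 are x_1..x_p, coordinates p..n-1 are y_1..y_q.\<close>

definition winner :: "nat \<Rightarrow> (nat \<Rightarrow> real) \<Rightarrow> (nat \<Rightarrow> real) \<Rightarrow> real" where
  "winner n u v = (\<Sum>j<n. u j * v j)"

definition sp_act :: "nat \<Rightarrow> (nat \<Rightarrow> nat) \<Rightarrow> (nat \<Rightarrow> real) \<Rightarrow> (nat \<Rightarrow> real) \<Rightarrow> (nat \<Rightarrow> real)" where
  "sp_act n \<sigma> s z = (\<lambda>j. if j < n then s j * z (\<sigma> j) else 0)"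

definition weyl_group :: "nat \<Rightarrow> ((nat \<Rightarrow> real) \<Rightarrow> (nat \<Rightarrow> real)) set" where
  "weyl_group n = {sp_act n \<sigma> s | \<sigma> s. \<sigma> permutes {..<n} \<and> (\<forall>j<n. s j = 1 \<or> s j = -1)}"

definition dom_cone_g :: "nat \<Rightarrow> (nat \<Rightarrow> real) set" where
  "dom_cone_g n = {z. (\<forall>k. Suc k < n \<longrightarrow> z (Suc k) \<le> z k) \<and> (0 < n \<longrightarrow> 0 \<le> z (n - 1))}"

definition dom_cone_k :: "nat \<Rightarrow> nat \<Rightarrow> (nat \<Rightarrow> real) set" where
  "dom_cone_k p q = {z.
     (\<forall>k. Suc k < p \<longrightarrow> z (Suc k) \<le> z k) \<and> (0 < p \<longrightarrow> 0 \<le> z (p - 1)) \<and>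
     (\<forall>k. p \<le> k \<and> Suc k < p + q \<longrightarrow> z (Suc k) \<le> z k) \<and> (0 < q \<longrightarrow> 0 \<le> z (p + q - 1))}"

definition weyl_group1 :: "nat \<Rightarrow> nat \<Rightarrow> ((nat \<Rightarrow> real) \<Rightarrow> (nat \<Rightarrow> real)) set" where
  "weyl_group1 p q = {w \<in> weyl_group (p + q). w ` dom_cone_g (p + q) \<subseteq> dom_cone_k p q}"

definition rho_c :: "nat \<Rightarrow> nat \<Rightarrow> nat \<Rightarrow> real" where
  "rho_c p q j = (if j < p then real (p - j) else if j < p + q then real (p + q - j) else 0)"

definition rho :: "nat \<Rightarrow> nat \<Rightarrow> real" where
  "rho n j = (if j < n then real (n - j) else 0)"

definition xi :: "nat \<Rightarrow> nat \<Rightarrow> real" where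
  "xi i j = (if j < i then 1 else 0)"

definition mkweight :: "nat \<Rightarrow> nat \<Rightarrow> (nat \<Rightarrow> real) \<Rightarrow> (nat \<Rightarrow> real) \<Rightarrow> nat \<Rightarrow> real" where
  "mkweight p q x y j = (if j < p then x j else if j < p + q then y (j - p) else 0)"

definition u_small :: "nat \<Rightarrow> nat \<Rightarrow> (nat \<Rightarrow> real) \<Rightarrow> bool" where
  "u_small p q \<nu> \<longleftrightarrow> (\<forall>i\<in>{1..p+q}. \<forall>w\<in>weyl_group1 p q.
      winner (p + q) (\<lambda>j. \<nu> j + 2 * rho_c p q j) (w (xi i)) \<le> 2 * winner (p + q) (rho (p + q)) (xi i))"

definition u_large :: "nat \<Rightarrow> nat \<Rightarrow> (nat \<Rightarrow> real) \<Rightarrow> bool" where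
  "u_large p q \<nu> \<longleftrightarrow> \<not> u_small p q \<nu>"

end

theory Submission imports Defs begin

lemma chain:
  fixes z :: "nat \<Rightarrow> real"
  assumes "\<forall>k. lo \<le> k \<and> Suc k < hi \<longrightarrow> z (Suc k) \<le> z k" "lo \<le> i" "i \<le> j" "j < hi"
  shows "z j \<le> z i"
  using assms(3,4)
proof (induction j)
  case 0 then show ?case by simp
next
  case (Suc j)
  show ?case
  proof (cases "i = Suc j")
    case True then show ?thesis by simp
  next
    case False
    then have "i \<le> j" using Suc by simp
    then have "z j \<le> z i" using Suc by simp
    moreover have "z (Suc j) \<le> z j" using assms(1,2) \<open>i \<le> j\<close> Suc.prems by simp
    ultimately show ?thesis by simp
  qed
qed

lemma C_nonneg:
  assumes "z \<in> dom_cone_k p q" "j < p + q"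
  shows "0 \<le> z j"
proof (cases "j < p")
  case True
  have "z (p - 1) \<le> z j"
    using assms(1) True by (intro chain[of 0 p z]) (auto simp: dom_cone_k_def)
  moreover have "0 \<le> z (p - 1)" using assms(1) True by (auto simp: dom_cone_k_def)
  ultimately show ?thesis by simp
next
  case False
  have "z (p + q - 1) \<le> z j"
    using assms False by (intro chain[of p "p+q" z]) (auto simp: dom_cone_k_def)
  moreover have "0 \<le> z (p + q - 1)" using assms(1) False assms(2) by (auto simp: dom_cone_k_def)
  ultimately show ?thesis by simp
qed

lemma Cg_nonneg:
  assumes "z \<in> dom_cone_g n" "i \<le> j" "j < n"
  shows "z j \<le> z i" "0 \<le> z j"
proof -
  show "z j \<le> z i" using assms by (intro chain[of 0 n z]) (auto simp: dom_cone_g_def)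
  have "z (n - 1) \<le> z j" using assms by (intro chain[of 0 n z]) (auto simp: dom_cone_g_def)
  moreover have "0 \<le> z (n - 1)" using assms by (auto simp: dom_cone_g_def)
  ultimately show "0 \<le> z j" by simp
qed

lemma xi_in: "xi i \<in> dom_cone_g n"
  by (auto simp: dom_cone_g_def xi_def)

lemma downclosed:
  fixes A :: "nat set"
  assumes "finite A" "\<forall>k\<in>A. \<forall>j\<le>k. j \<in> A"
  shows "A = {..<card A}"
proof (cases "A = {}")
  case True then show ?thesis by simp
next
  case False
  have "A = {..Max A}"
  proof (intro set_eqI iffI)
    fix x assume "x \<in> A" then show "x \<in> {..Max A}" using assms by auto
  next
    fix x assume "x \<in> {..Max A}"
    moreover have "Max A \<in> A" using assms False by simp
    ultimately show "x \<in> A" using assms(2) by auto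
  qed
  then show ?thesis by (metis card_atMost lessThan_Suc_atMost)
qed

lemma tri:
  assumes "m \<le> N"
  shows "(\<Sum>j<m. 2 * real (N - j)) = 2 * real m * real N - real m * real m + real m"
  using assms
proof (induction m)
  case 0 then show ?case by simp
next
  case (Suc m)
  then have "(\<Sum>j<Suc m. 2 * real (N - j)) = 2 * real (N - m) + (2 * real m * real N - real m * real m + real m)"
    by simp
  also have "\<dots> = 2 * real (Suc m) * real N - real (Suc m) * real (Suc m) + real (Suc m)"
    using Suc.prems by (simp add: of_nat_diff algebra_simps)
  finally show ?case .
qed

lemma rho_sum:
  assumes "i \<le> n"
  shows "winner n (rho n) (xi i) = (\<Sum>j<i. real (n - j))"
proof -
  have "winner n (rho n) (xi i) = (\<Sum>j<n. if j \<in> {j. j < i} then real (n - j) else 0)"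
    unfolding winner_def by (intro sum.cong) (auto simp: rho_def xi_def)
  also have "\<dots> = sum (\<lambda>j. real (n - j)) ({..<n} \<inter> {j. j < i})"
    by (rule sum.inter_restrict[symmetric]) simp
  also have "{..<n} \<inter> {j. j < i} = {..<i}" using assms by auto
  finally show ?thesis .
qed

lemma key_sum:
  assumes "f \<le> p" "g \<le> q" "\<forall>j<p+q. v j = (if j < f \<or> (p \<le> j \<and> j < p+g) then 1 else 0)"
  shows "winner (p+q) (\<lambda>j. mkweight p q (\<lambda>k. real (a k)) (\<lambda>k. real (b k)) j + 2 * rho_c p q j) v
     = (\<Sum>j<f. real (a j)) + (\<Sum>j<g. real (b j)) + (2*real f*real p - real f*real f + real f)
        + (2*real g*real q - real g*real g + real g)"
proof -
  define c where "c = (\<lambda>j. mkweight p q (\<lambda>k. real (a k)) (\<lambda>k. real (b k)) j + 2 * rho_c p q j)"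
  define T where "T = {..<f} \<union> {p..<p+g}"
  have "winner (p+q) c v = (\<Sum>j<p+q. if j \<in> T then c j else 0)"
    unfolding winner_def using assms(3) by (intro sum.cong) (auto simp: T_def)
  also have "\<dots> = sum c ({..<p+q} \<inter> T)" by (simp add: sum.inter_restrict)
  also have "{..<p+q} \<inter> T = T" using assms(1,2) by (auto simp: T_def)
  also have "sum c T = sum c {..<f} + sum c {p..<p+g}"
    unfolding T_def using assms(1) by (intro sum.union_disjoint) auto
  also have "sum c {..<f} = (\<Sum>j<f. real (a j) + 2 * real (p - j))"
    using assms(1) by (intro sum.cong) (auto simp: c_def mkweight_def rho_c_def)
  also have "\<dots> = (\<Sum>j<f. real (a j)) + (2*real f*real p - real f*real f + real f)"
    using tri[OF assms(1)] by (simp add: sum.distrib)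
  also have "sum c {p..<p+g} = sum (\<lambda>k. c (k + p)) {0..<g}"
    using sum.shift_bounds_nat_ivl[of c 0 p g] by (simp add: add.commute)
  also have "\<dots> = (\<Sum>k<g. real (b k) + 2 * real (q - k))"
    using assms(2) by (intro sum.cong) (auto simp: c_def mkweight_def rho_c_def atLeast0LessThan)
  also have "\<dots> = (\<Sum>j<g. real (b j)) + (2*real g*real q - real g*real g + real g)"
    using tri[OF assms(2)] by (simp add: sum.distrib)
  finally show ?thesis unfolding c_def by simp
qed


lemma ineq_equiv:
  assumes "f \<le> p" "g \<le> q" "n = p + q"
    "\<forall>j<p+q. v j = (if j < f \<or> (p \<le> j \<and> j < p+g) then 1 else 0)"
  shows "(winner n (\<lambda>j. mkweight p q (\<lambda>k. real (a k)) (\<lambda>k. real (b k)) j + 2 * rho_c p q j) v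
            > 2 * winner n (rho n) (xi (f+g)))
     \<longleftrightarrow> int (\<Sum>i<f. a i) + int (\<Sum>j<g. b j) > 2 * int p * int q - 2 * (int p - int f) * (int q - int g)"
proof -
  have fg: "f + g \<le> n" using assms by simp
  have r: "2 * winner n (rho n) (xi (f+g)) = 2 * real (f+g) * real n - real (f+g) * real (f+g) + real (f+g)"
    using rho_sum[OF fg] tri[OF fg] by (simp add: sum_distrib_left)
  have k: "winner n (\<lambda>j. mkweight p q (\<lambda>k. real (a k)) (\<lambda>k. real (b k)) j + 2 * rho_c p q j) v
     = real (\<Sum>j<f. a j) + real (\<Sum>j<g. b j) + (2*real f*real p - real f*real f + real f)
        + (2*real g*real q - real g*real g + real g)"
    using key_sum[OF assms(1,2,4), of a b] assms(3) by simp
  have "(int (\<Sum>i<f. a i) + int (\<Sum>j<g. b j) > 2 * int p * int q - 2 * (int p - int f) * (int q - int g))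
     \<longleftrightarrow> (real_of_int (int (\<Sum>i<f. a i) + int (\<Sum>j<g. b j)) > real_of_int (2 * int p * int q - 2 * (int p - int f) * (int q - int g)))"
    by linarith
  also have "\<dots> \<longleftrightarrow> real (\<Sum>i<f. a i) + real (\<Sum>j<g. b j) > 2 * real p * real q - 2 * (real p - real f) * (real q - real g)"
    by simp
  finally have e: "(int (\<Sum>i<f. a i) + int (\<Sum>j<g. b j) > 2 * int p * int q - 2 * (int p - int f) * (int q - int g))
     \<longleftrightarrow> real (\<Sum>i<f. a i) + real (\<Sum>j<g. b j) > 2 * real p * real q - 2 * (real p - real f) * (real q - real g)" .
  show ?thesis apply (subst k) apply (subst r) apply (subst e) using assms(3) by (simp add: algebra_simps)
qed


lemma construct:
  assumes "f \<le> p" "g \<le> q" "n = p + q"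
  shows "\<exists>w\<in>weyl_group1 p q. \<forall>j<n. w (xi (f+g)) j = (if j < f \<or> (p \<le> j \<and> j < p+g) then 1 else 0)"
proof -
  define \<sigma> where "\<sigma> = (\<lambda>j::nat. if j < f then j else if j < p then j + g else if j < p + g then j - p + f else j)"
  have img: "\<sigma> ` {..<n} \<subseteq> {..<n}" using assms by (auto simp: \<sigma>_def)
  have inj: "inj_on \<sigma> {..<n}" using assms by (auto simp: \<sigma>_def inj_on_def split: if_splits)
  have "\<sigma> ` {..<n} = {..<n}" using endo_inj_surj[OF _ img inj] by simp
  then have bij: "bij_betw \<sigma> {..<n} {..<n}" using inj by (simp add: bij_betw_def)
  have perm: "\<sigma> permutes {..<n}"
    by (rule bij_imp_permutes[OF bij]) (use assms in \<open>auto simp: \<sigma>_def\<close>)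
  define w where "w = sp_act n \<sigma> (\<lambda>_. 1)"
  have W: "w \<in> weyl_group n" unfolding weyl_group_def w_def using perm by blast
  have sn: "\<sigma> j < n" if "j < n" for j using img that by auto
  have mono1: "\<sigma> k \<le> \<sigma> (Suc k)" if "Suc k < p" for k using that assms by (auto simp: \<sigma>_def)
  have mono2: "\<sigma> k \<le> \<sigma> (Suc k)" if "p \<le> k" "Suc k < p + q" for k using that assms by (auto simp: \<sigma>_def)
  have "w ` dom_cone_g n \<subseteq> dom_cone_k p q"
  proof
    fix y assume "y \<in> w ` dom_cone_g n"
    then obtain z where z: "z \<in> dom_cone_g n" and y: "y = w z" by auto
    have y': "y j = z (\<sigma> j)" if "j < n" for j using that by (simp add: y w_def sp_act_def)
    show "y \<in> dom_cone_k p q"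
      unfolding dom_cone_k_def
    proof (intro CollectI conjI allI impI)
      fix k assume k: "Suc k < p"
      show "y (Suc k) \<le> y k" using k assms y' Cg_nonneg(1)[OF z mono1[OF k] sn] by simp
    next
      assume p0: "0 < p"
      have "p - 1 < n" using p0 assms by simp
      then show "0 \<le> y (p - 1)" using y' Cg_nonneg(2)[OF z le_refl sn] by simp
    next
      fix k assume k: "p \<le> k \<and> Suc k < p + q"
      show "y (Suc k) \<le> y k" using k assms y' Cg_nonneg(1)[OF z mono2 sn] by simp
    next
      assume q0: "0 < q"
      have "p + q - 1 < n" using q0 assms by simp
      then show "0 \<le> y (p + q - 1)" using y' Cg_nonneg(2)[OF z le_refl sn] by simp
    qed
  qed
  then have "w \<in> weyl_group1 p q" using W assms by (simp add: weyl_group1_def)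
  moreover have "\<forall>j<n. w (xi (f+g)) j = (if j < f \<or> (p \<le> j \<and> j < p+g) then 1 else 0)"
    using assms by (auto simp: w_def sp_act_def xi_def \<sigma>_def)
  ultimately show ?thesis by blast
qed


lemma analyse:
  assumes "w \<in> weyl_group1 p q" "i \<in> {1..n}" "n = p + q"
  shows "\<exists>f\<le>p. \<exists>g\<le>q. f + g = i \<and> (\<forall>j<n. w (xi i) j = (if j < f \<or> (p \<le> j \<and> j < p+g) then 1 else 0))"
proof -
  obtain \<sigma> s where w: "w = sp_act n \<sigma> s" and perm: "\<sigma> permutes {..<n}"
    and sgn: "\<forall>j<n. s j = 1 \<or> s j = -1"
    using assms(1,3) unfolding weyl_group1_def weyl_group_def by blast
  have cone: "w ` dom_cone_g n \<subseteq> dom_cone_k p q" using assms(1,3) by (simp add: weyl_group1_def)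
  have sn: "\<sigma> j < n" if "j < n" for j using permutes_in_image[OF perm] that by simp
  have "w (xi n) \<in> dom_cone_k p q" using cone xi_in by blast
  then have "0 \<le> w (xi n) j" if "j < n" for j using C_nonneg that assms(3) by blast
  then have s1: "s j = 1" if "j < n" for j
    using sgn that sn[OF that] by (fastforce simp: w sp_act_def xi_def)
  define v where "v = w (xi i)"
  have vC: "v \<in> dom_cone_k p q" using cone xi_in v_def by blast
  have vj: "v j = (if \<sigma> j < i then 1 else 0)" if "j < n" for j
    using that s1 by (simp add: v_def w sp_act_def xi_def)
  define A where "A = {j. j < p \<and> \<sigma> j < i}"
  define B where "B = {k. k < q \<and> \<sigma> (p + k) < i}"
  have fA: "finite A" "finite B" by (auto simp: A_def B_def)
  have dA: "\<forall>k\<in>A. \<forall>j\<le>k. j \<in> A"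
  proof (intro ballI allI impI)
    fix k j assume k: "k \<in> A" and jk: "j \<le> k"
    have "v k \<le> v j" using vC jk k by (intro chain[of 0 p v]) (auto simp: dom_cone_k_def A_def)
    moreover have "v k = 1" using k vj assms(3) by (auto simp: A_def)
    ultimately show "j \<in> A" using vj[of j] k jk assms(3) by (auto simp: A_def split: if_splits)
  qed
  have dB: "\<forall>k\<in>B. \<forall>j\<le>k. j \<in> B"
  proof (intro ballI allI impI)
    fix k j assume k: "k \<in> B" and jk: "j \<le> k"
    have "v (p + k) \<le> v (p + j)" using vC jk k by (intro chain[of p "p+q" v]) (auto simp: dom_cone_k_def B_def)
    moreover have "v (p + k) = 1" using k vj assms(3) by (auto simp: B_def)
    ultimately show "j \<in> B" using vj[of "p + j"] k jk assms(3) by (auto simp: B_def split: if_splits)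
  qed
  define f where "f = card A"
  define g where "g = card B"
  have Af: "A = {..<f}" using downclosed[OF fA(1) dA] f_def by simp
  have Bg: "B = {..<g}" using downclosed[OF fA(2) dB] g_def by simp
  have fp: "f \<le> p" unfolding f_def by (rule card_mono[of "{..<p}", simplified]) (auto simp: A_def)
  have gq: "g \<le> q" unfolding g_def by (rule card_mono[of "{..<q}", simplified]) (auto simp: B_def)
  have mem: "\<sigma> j < i \<longleftrightarrow> j < f \<or> (p \<le> j \<and> j < p + g)" if "j < n" for j
  proof (cases "j < p")
    case True
    then have "\<sigma> j < i \<longleftrightarrow> j \<in> A" by (simp add: A_def)
    then show ?thesis using Af True fp by auto
  next
    case False
    then have "\<sigma> j < i \<longleftrightarrow> j - p \<in> B" using that assms(3) by (auto simp: B_def)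
    then show ?thesis using Bg False fp by auto
  qed
  define S where "S = {j. j < n \<and> \<sigma> j < i}"
  have S1: "S = {..<f} \<union> {p..<p+g}" using mem fp gq assms(3) by (auto simp: S_def)
  have cS: "card S = f + g" unfolding S1 using fp by (subst card_Un_disjoint) auto
  have inj: "inj_on \<sigma> {..<n}" using permutes_inj_on[OF perm] .
  have im: "\<sigma> ` {..<n} = {..<n}" using permutes_image[OF perm] .
  have "\<sigma> ` S = {..<i}"
  proof
    show "\<sigma> ` S \<subseteq> {..<i}" by (auto simp: S_def)
  next
    show "{..<i} \<subseteq> \<sigma> ` S"
    proof
      fix y assume "y \<in> {..<i}"
      then have "y \<in> \<sigma> ` {..<n}" using im assms(2) by auto
      then obtain x where "x < n" "y = \<sigma> x" by auto
      then show "y \<in> \<sigma> ` S" using \<open>y \<in> {..<i}\<close> by (auto simp: S_def)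
    qed
  qed
  moreover have "inj_on \<sigma> S" using inj by (rule inj_on_subset) (auto simp: S_def)
  ultimately have "card S = i" by (metis card_image card_lessThan)
  then have "f + g = i" using cS by simp
  moreover have "\<forall>j<n. w (xi i) j = (if j < f \<or> (p \<le> j \<and> j < p+g) then 1 else 0)"
    using vj mem unfolding v_def by simp
  ultimately show ?thesis using fp gq by blast
qed


theorem proposition2p2:
  fixes p q n :: nat and a b :: "nat \<Rightarrow> nat"
  assumes "1 \<le> p" and "p \<le> q" and "n = p + q"
    and dom_a: "\<forall>k. Suc k < p \<longrightarrow> a (Suc k) \<le> a k"
    and dom_b: "\<forall>k. Suc k < q \<longrightarrow> b (Suc k) \<le> b k"
  shows "((\<exists>w\<in>weyl_group1 p q. \<exists>i\<in>{1..n}.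
            winner n (\<lambda>j. mkweight p q (\<lambda>k. real (a k)) (\<lambda>k. real (b k)) j + 2 * rho_c p q j) (w (xi i))
              > 2 * winner n (rho n) (xi i))
          \<longleftrightarrow> u_large p q (mkweight p q (\<lambda>k. real (a k)) (\<lambda>k. real (b k))))
       \<and> ((\<exists>w\<in>weyl_group1 p q. \<exists>i\<in>{1..n}.
            winner n (\<lambda>j. mkweight p q (\<lambda>k. real (a k)) (\<lambda>k. real (b k)) j + 2 * rho_c p q j) (w (xi i))
              > 2 * winner n (rho n) (xi i))
          \<longleftrightarrow> (\<exists>f\<le>p. \<exists>g\<le>q.
            int (\<Sum>i<f. a i) + int (\<Sum>j<g. b j) > 2 * int p * int q - 2 * (int p - int f) * (int q - int g)))"
    (is "(?L \<longleftrightarrow> ?U) \<and> (?L \<longleftrightarrow> ?R)")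
proof
  show "?L \<longleftrightarrow> ?U" using assms(3) by (auto simp: u_large_def u_small_def not_le)
next
  show "?L \<longleftrightarrow> ?R"
  proof
    assume ?L
    then obtain w i where w: "w \<in> weyl_group1 p q" and i: "i \<in> {1..n}" and
      gt: "winner n (\<lambda>j. mkweight p q (\<lambda>k. real (a k)) (\<lambda>k. real (b k)) j + 2 * rho_c p q j) (w (xi i))
              > 2 * winner n (rho n) (xi i)" by blast
    obtain f g where fg: "f \<le> p" "g \<le> q" "f + g = i"
      and v: "\<forall>j<n. w (xi i) j = (if j < f \<or> (p \<le> j \<and> j < p+g) then 1 else 0)"
      using analyse[OF w i assms(3)] by blast
    have "\<forall>j<p+q. w (xi (f+g)) j = (if j < f \<or> (p \<le> j \<and> j < p+g) then 1 else 0)"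
      using v fg(3) assms(3) by simp
    from ineq_equiv[OF fg(1,2) assms(3) this, of a b] gt fg(3)
    show ?R using fg by blast
  next
    assume ?R
    then obtain f g where fg: "f \<le> p" "g \<le> q" and
      ig: "int (\<Sum>i<f. a i) + int (\<Sum>j<g. b j) > 2 * int p * int q - 2 * (int p - int f) * (int q - int g)"
      by blast
    obtain w where w: "w \<in> weyl_group1 p q"
      and v: "\<forall>j<n. w (xi (f+g)) j = (if j < f \<or> (p \<le> j \<and> j < p+g) then 1 else 0)"
      using construct[OF fg assms(3)] by blast
    have v': "\<forall>j<p+q. w (xi (f+g)) j = (if j < f \<or> (p \<le> j \<and> j < p+g) then 1 else 0)"
      using v assms(3) by simp
    have pos: "f + g \<noteq> 0"
    proof
      assume "f + g = 0" then show False using ig by simp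
    qed
    have "f + g \<in> {1..n}" using pos fg assms(3) by auto
    moreover have "winner n (\<lambda>j. mkweight p q (\<lambda>k. real (a k)) (\<lambda>k. real (b k)) j + 2 * rho_c p q j) (w (xi (f+g)))
              > 2 * winner n (rho n) (xi (f+g))"
      using ineq_equiv[OF fg assms(3) v', of a b] ig by blast
    ultimately show ?L using w by blast
  qed
qed

end
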